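(* Let $\theta,\epsilon,C,\Gamma,\boldsymbol{\Phi}$ be as below with $\boldsymbol{\Phi}(\theta)\in\overline{\mathbf{CM}}(n)$, and let $\Sigma^c_\epsilon(t)$, $t\ge0$, be the covariance of the $\theta$-periodic-in-distribution Gaussian solution, i.e. $\Sigma^c_\epsilon(t)=\boldsymbol{\Phi}(t)\big[\Sigma^c_\epsilon(0)+\epsilon\int_0^t(\boldsymbol{\Phi}^{-1}(s)\Gamma(s))(\boldsymbol{\Phi}^{-1}(s)\Gamma(s))^{\top}ds\big]\boldsymbol{\Phi}^{\top}(t)$, where $\Sigma^c_\epsilon(0)$ is the unique symmetric solution of $\boldsymbol{\Phi}(\theta)\Sigma\boldsymbol{\Phi}(\theta)^{\top}-\Sigma+\epsilon M=\mathbb{O}$. Suppose that at least one of the following holds: (i) $\xi=n$; (ii) $\eta_{k_1}=n$ for some $k_1\in\{1,\dots,\xi\}$; (iii) $\overline\xi=n$; (iv) $\overline\eta_{k_2}=n$ for some $k_2\in\{1,\dots,\overline\xi\}$. Then $\Sigma^c_\epsilon(t)$ is positive definite for every $t\ge0$.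
   Context: $\theta>0$, $\epsilon>0$; $C:[0,\infty)\to\mathbb{R}^{n\times n}$ and $\Gamma:[0,\infty)\to\mathbb{R}^{n\times N}$ are continuous and $\theta$-periodic; $\boldsymbol{\Phi}$ is the fundamental matrix $\boldsymbol{\Phi}'=C\boldsymbol{\Phi}$, $\boldsymbol{\Phi}(0)=\mathbf{I}_n$. $\overline{\mathbf{CM}}(n)$ is the set of real $n\times n$ matrices with all eigenvalues of modulus in $(0,1)$. $E_{n,j}$ is the diagonal matrix with a single $1$ in position $(j,j)$; $\mathbf{u}_j$ is the $j$-th standard basis vector of $\mathbb{R}^n$. $M:=\int_0^\theta(\boldsymbol{\Phi}(\theta)\boldsymbol{\Phi}^{-1}(t)\Gamma(t))(\boldsymbol{\Phi}(\theta)\boldsymbol{\Phi}^{-1}(t)\Gamma(t))^{\top}dt$, $\xi=\operatorname{rank}M$, and $\mathcal{G}_0$ is an orthogonal matrix with $\mathcal{G}_0M\mathcal{G}_0^{\top}=\sum_{k=1}^{\xi}\lambda_k^+E_{n,\phi_k}$, $\lambda_k^+>0$, $\phi_1<\dots<\phi_\xi$. Put $A_{[1]}=\mathcal{G}_0\boldsymbol{\Phi}(\theta)\mathcal{G}_0^{-1}$ and $\eta_k:=\dim\operatorname{span}\{A_{[1]}^j\mathbf{u}_{\phi_k}:j\ge0\}$. Further, $\lambda_\vartriangle>0$, $\overline\xi\in\{0,\dots,\xi\}$ and indices $\overline\phi_1<\dots<\overline\phi_{\overline\xi}$ in $\{1,\dots,n\}$ are chosen such that $M\succeq\lambda_\vartriangle\sum_{k=1}^{\overline\xi}E_{n,\overline\phi_k}$,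 and $\overline\eta_k:=\dim\operatorname{span}\{\boldsymbol{\Phi}(\theta)^j\mathbf{u}_{\overline\phi_k}:j\ge0\}$. *)

theory Defs
  imports "HOL-Analysis.Analysis"
begin

definition cmat :: "real^'n^'m \<Rightarrow> complex^'n^'m" where
  "cmat A = (\<chi> i j. complex_of_real (A $ i $ j))"

definition CM_bar :: "real^'n^'n \<Rightarrow> bool" where
  "CM_bar A \<longleftrightarrow> (\<forall>z::complex. det (mat z - cmat A) = 0 \<longrightarrow> 0 < cmod z \<and> cmod z < 1)"

fun mat_pow :: "'a::semiring_1^'n^'n \<Rightarrow> nat \<Rightarrow> 'a^'n^'n" where
  "mat_pow A 0 = mat 1"
| "mat_pow A (Suc k) = A ** mat_pow A k"

definition Ediag :: "'n::finite \<Rightarrow> real^'n^'n" where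
  "Ediag j = (\<chi> a b. if a = j \<and> b = j then 1 else 0)"

definition uvec :: "'n::finite \<Rightarrow> real^'n" where
  "uvec j = axis j 1"

definition psd_ge :: "real^'n^'n \<Rightarrow> real^'n^'n \<Rightarrow> bool" where
  "psd_ge A B \<longleftrightarrow> (\<forall>x. 0 \<le> x \<bullet> ((A - B) *v x))"

definition pos_def :: "real^'n^'n \<Rightarrow> bool" where
  "pos_def A \<longleftrightarrow> transpose A = A \<and> (\<forall>x. x \<noteq> 0 \<longrightarrow> 0 < x \<bullet> (A *v x))"

definition krylov_dim :: "real^'n^'n \<Rightarrow> real^'n \<Rightarrow> nat" where
  "krylov_dim A u = dim (span (range (\<lambda>j. mat_pow A j *v u)))"

end

theory Submission
  imports Defs "Jordan_Normal_Form.Spectral_Radius"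
begin


lemma mat_pow_Suc': "mat_pow (Y::'a::semiring_1^'n^'n) (Suc k) = mat_pow Y k ** Y"
proof (induction k)
  case 0 then show ?case by simp
next
  case (Suc k)
  have "mat_pow Y (Suc (Suc k)) = Y ** mat_pow Y (Suc k)" by simp
  also have "\<dots> = Y ** (mat_pow Y k ** Y)" using Suc by simp
  also have "\<dots> = mat_pow Y (Suc k) ** Y" by (simp add: matrix_mul_assoc)
  finally show ?case .
qed

lemma bridge_decay:
  fixes X :: "complex^'n^'n"
  assumes ev: "\<And>z w. w \<noteq> 0 \<Longrightarrow> X *v w = z *s w \<Longrightarrow> cmod z < 1"
  shows "\<exists>c r. 0 < r \<and> r < 1 \<and> (\<forall>k i j. cmod (mat_pow X k $ i $ j) \<le> c * r^k)"
proof -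
  define n where "n = CARD('n)"
  obtain h where h: "bij_betw h {0..<n} (UNIV::'n set)"
    using ex_bij_betw_nat_finite[of "UNIV::'n set"] unfolding n_def by auto
  define hi where "hi = inv_into {0..<n} h"
  have hi1: "hi a < n" "h (hi a) = a" for a
  proof -
    have "a \<in> h ` {0..<n}" using h by (simp add: bij_betw_def)
    then show "hi a < n" "h (hi a) = a" unfolding hi_def
      using inv_into_into[of a h "{0..<n}"] f_inv_into_f[of a h "{0..<n}"] by auto
  qed
  have hi2: "i < n \<Longrightarrow> hi (h i) = i" for i
    using h unfolding hi_def by (auto simp: bij_betw_def inv_into_f_f)
  have hinj: "i < n \<Longrightarrow> j < n \<Longrightarrow> h i = h j \<Longrightarrow> i = j" for i j
    using hi2 by metis
  define toJ :: "complex^'n^'n \<Rightarrow> complex Matrix.mat" where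
    "toJ Y = Matrix.mat n n (\<lambda>(i,j). Y $ h i $ h j)" for Y
  have carr: "toJ Y \<in> carrier_mat n n" for Y unfolding toJ_def by auto
  have dims[simp]: "dim_row (toJ Y) = n" "dim_col (toJ Y) = n" for Y unfolding toJ_def by auto
  have reidx: "(\<Sum>l\<in>{0..<n}. g (h l)) = (\<Sum>b\<in>UNIV. g b)" for g :: "'n \<Rightarrow> complex"
    using sum.reindex_bij_betw[OF h] by simp
  have tmult: "toJ (Y ** Z) = toJ Y * toJ Z" for Y Z
  proof (rule eq_matI)
    fix i j assume i: "i < dim_row (toJ Y * toJ Z)" and j: "j < dim_col (toJ Y * toJ Z)"
    then have i': "i < n" and j': "j < n" using carr by auto
    have "(toJ Y * toJ Z) $$ (i, j) = Matrix.row (toJ Y) i \<bullet> col (toJ Z) j"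
      using i' j' carr by (simp add: index_mult_mat)
    also have "\<dots> = (\<Sum>l\<in>{0..<n}. Y $ h i $ h l * Z $ h l $ h j)"
      using i' j' by (simp add: scalar_prod_def toJ_def Matrix.row_def col_def)
    also have "\<dots> = (\<Sum>b\<in>UNIV. Y $ h i $ b * Z $ b $ h j)"
      by (rule reidx)
    also have "\<dots> = toJ (Y ** Z) $$ (i,j)"
      using i' j' by (simp add: toJ_def matrix_matrix_mult_def)
    finally show "toJ (Y ** Z) $$ (i, j) = (toJ Y * toJ Z) $$ (i, j)" by simp
  qed (use carr in auto)
  have tone: "toJ (Finite_Cartesian_Product.mat 1) = 1\<^sub>m n"
    by (rule eq_matI) (auto simp: toJ_def Finite_Cartesian_Product.mat_def dest: hinj)
  have tpow: "toJ (mat_pow Y k) = toJ Y ^\<^sub>m k" for Y k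
  proof (induction k)
    case 0 then show ?case using carr[of Y] by (simp add: tone)
  next
    case (Suc k) then show ?case by (simp only: mat_pow_Suc' tmult pow_mat.simps)
  qed
  have tev: "\<exists>w. w \<noteq> 0 \<and> Y *v w = \<mu> *s w" if "eigenvector (toJ Y) v \<mu>" for Y v \<mu>
  proof -
    have v: "dim_vec v = n" "v \<noteq> 0\<^sub>v n" "toJ Y *\<^sub>v v = \<mu> \<cdot>\<^sub>v v"
      using that carr[of Y] unfolding eigenvector_def by auto
    define w :: "complex^'n" where "w = (\<chi> a. v $ (hi a))"
    have "(Y *v w) $ a = (\<mu> *s w) $ a" for a
    proof -
      have "(Y *v w) $ a = (\<Sum>b\<in>UNIV. Y $ a $ b * w $ b)" by (simp add: matrix_vector_mult_def)
      also have "\<dots> = (\<Sum>l\<in>{0..<n}. Y $ h (hi a) $ h l * v $ l)"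
        using reidx[of "\<lambda>b. Y $ h (hi a) $ b * w $ b", symmetric] hi1 hi2
        by (simp add: w_def)
      also have "\<dots> = (toJ Y *\<^sub>v v) $ (hi a)"
        using hi1 v(1) by (simp add: scalar_prod_def toJ_def Matrix.row_def)
      also have "\<dots> = \<mu> * v $ (hi a)" using v hi1 by simp
      finally show "(Y *v w) $ a = (\<mu> *s w) $ a" by (simp add: w_def)
    qed
    then have "Y *v w = \<mu> *s w" by (simp add: Finite_Cartesian_Product.vec_eq_iff)
    moreover have "w \<noteq> 0"
    proof
      assume "w = 0"
      then have "v $ i = 0" if "i < n" for i
        using that hi2 by (metis (no_types) vec_lambda_beta w_def zero_index)
      then have "v = 0\<^sub>v n" using v by auto
      with v show False by simp
    qed
    ultimately show ?thesis by blast
  qed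
  have tev2: "eigenvector (toJ Y) (Matrix.vec n (\<lambda>i. w $ h i)) \<mu>" if "w \<noteq> 0" "Y *v w = \<mu> *s w" for Y w \<mu>
  proof -
    define v where "v = Matrix.vec n (\<lambda>i. w $ h i)"
    have "v \<noteq> 0\<^sub>v n"
    proof
      assume "v = 0\<^sub>v n"
      then have "w $ a = 0" for a using hi1[of a]
        by (metis index_vec index_zero_vec(1) v_def)
      then have "w = 0" by (simp add: Finite_Cartesian_Product.vec_eq_iff)
      with that show False by simp
    qed
    moreover have "toJ Y *\<^sub>v v = \<mu> \<cdot>\<^sub>v v"
    proof (rule eq_vecI)
      fix i assume "i < dim_vec (\<mu> \<cdot>\<^sub>v v)"
      then have i: "i < n" by (simp add: v_def)
      have "(toJ Y *\<^sub>v v) $ i = (\<Sum>l\<in>{0..<n}. Y $ h i $ h l * w $ h l)"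
        using i carr[of Y] by (simp add: scalar_prod_def toJ_def Matrix.row_def v_def)
      also have "\<dots> = (Y *v w) $ h i" using reidx by (simp add: matrix_vector_mult_def)
      also have "\<dots> = (\<mu> \<cdot>\<^sub>v v) $ i" using that i by (simp add: v_def)
      finally show "(toJ Y *\<^sub>v v) $ i = (\<mu> \<cdot>\<^sub>v v) $ i" .
    qed (use carr in \<open>simp add: v_def\<close>)
    ultimately show ?thesis using carr[of Y] unfolding eigenvector_def v_def by auto
  qed
  have npos: "0 < n" unfolding n_def by simp
  define J0 where "J0 = toJ X"
  have fin: "finite (spectrum J0)" using card_finite_spectrum[OF carr] unfolding J0_def by blast
  have spec_lt: "cmod \<mu> < 1" if "\<mu> \<in> spectrum J0" for \<mu>
  proof -
    from that obtain v where "eigenvector (toJ X) v \<mu>"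
      unfolding spectrum_def eigenvalue_def J0_def by auto
    from tev[OF this] obtain w where "w \<noteq> 0" "X *v w = \<mu> *s w" by blast
    then show ?thesis using ev by blast
  qed
  define \<rho> where "\<rho> = Max (insert 0 (cmod ` spectrum J0))"
  have \<rho>0: "0 \<le> \<rho>" unfolding \<rho>_def using fin by (simp add: Max_ge_iff)
  have \<rho>1: "\<rho> < 1" unfolding \<rho>_def using fin spec_lt by (simp add: Max_less_iff)
  have \<rho>ge: "cmod \<mu> \<le> \<rho>" if "\<mu> \<in> spectrum J0" for \<mu>
    unfolding \<rho>_def using fin that by (simp add: Max_ge_iff)
  define r where "r = (\<rho> + 1) / 2"
  have r0: "0 < r" and r1: "r < 1" and r2: "\<rho> < r" using \<rho>0 \<rho>1 unfolding r_def by auto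
  define X' where "X' = (1/r) *\<^sub>R X"
  have smul: "(a *\<^sub>R A) ** (b *\<^sub>R B) = (a*b) *\<^sub>R (A ** B)" for a b :: real and A B :: "complex^'n^'n"
    by (simp add: matrix_scalar_ac scalar_matrix_assoc[symmetric] mult.commute)
  have powX': "mat_pow X' k = (1/r)^k *\<^sub>R mat_pow X k" for k
  proof (induction k)
    case 0 then show ?case by simp
  next
    case (Suc k)
    have "mat_pow X' (Suc k) = X' ** mat_pow X' k" by simp
    also have "\<dots> = ((1/r) *\<^sub>R X) ** ((1/r)^k *\<^sub>R mat_pow X k)" using Suc by (simp add: X'_def)
    also have "\<dots> = (1/r)^(Suc k) *\<^sub>R mat_pow X (Suc k)" by (simp only: smul) simp
    finally show ?case .
  qed
  define J where "J = toJ X'"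
  have srJ: "spectral_radius J < 1"
  proof -
    obtain \<mu> where mu: "\<mu> \<in> spectrum J" and sr: "spectral_radius J = cmod \<mu>"
      using spectral_radius_mem_max(1)[OF carr npos, of X'] unfolding J_def by auto
    from mu obtain v where "eigenvector (toJ X') v \<mu>"
      unfolding spectrum_def eigenvalue_def J_def by auto
    from tev[OF this] obtain w where w: "w \<noteq> 0" "X' *v w = \<mu> *s w" by blast
    have XX: "X = r *\<^sub>R X'" using r0 by (simp add: X'_def)
    have "(r *\<^sub>R X') *v w = r *\<^sub>R (X' *v w)"
      by (simp add: Finite_Cartesian_Product.vec_eq_iff matrix_vector_mult_def scaleR_sum_right)
    also have "\<dots> = (complex_of_real r * \<mu>) *s w"
      using w(2) by (simp add: Finite_Cartesian_Product.vec_eq_iff scaleR_conv_of_real[where 'a=complex] mult.assoc)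
    finally have "X *v w = (complex_of_real r * \<mu>) *s w" unfolding XX .
    from tev2[OF w(1) this] have "complex_of_real r * \<mu> \<in> spectrum J0"
      unfolding spectrum_def eigenvalue_def J0_def by auto
    from \<rho>ge[OF this] have "r * cmod \<mu> \<le> \<rho>" using r0 by (simp add: norm_mult)
    with r2 r0 have "cmod \<mu> < 1"
      by (metis less_le_trans mult_less_cancel_left_pos mult.right_neutral not_le)
    then show ?thesis using sr by simp
  qed
  obtain c where c: "\<And>k. norm_bound (J ^\<^sub>m k) c"
    using spectral_radius_jnf_norm_bound_less_1_upper_triangular[OF carr srJ[unfolded J_def]]
    unfolding J_def by blast
  have "cmod (mat_pow X k $ i $ j) \<le> c * r^k" for k i j
  proof -
    have "J ^\<^sub>m k = toJ (mat_pow X' k)" unfolding J_def by (simp add: tpow)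
    then have "cmod (toJ (mat_pow X' k) $$ (hi i, hi j)) \<le> c"
      using c[of k] hi1 carr unfolding norm_bound_def by (metis dims)
    then have "cmod (mat_pow X' k $ i $ j) \<le> c" using hi1 by (simp add: toJ_def)
    then have "(1/r)^k * cmod (mat_pow X k $ i $ j) \<le> c" using r0 by (simp add: powX')
    then show ?thesis using r0 by (simp add: field_simps)
  qed
  then show ?thesis using r0 r1 by blast
qed

hide_const (open) Matrix.orthogonal Matrix.mat Matrix.vec Matrix.row Matrix.col Determinant.det Matrix.vec_index Matrix.scalar_prod
no_notation Matrix.vec_index (infixl "$" 100)
no_notation Matrix.scalar_prod (infix "\<bullet>" 70)


lemma cmat_mult: "cmat (A ** B) = cmat A ** cmat B"
  by (simp add: cmat_def Finite_Cartesian_Product.vec_eq_iff matrix_matrix_mult_def)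

lemma cmat_one: "cmat (mat 1 :: real^'n^'n) = mat 1"
  by (simp add: cmat_def Finite_Cartesian_Product.vec_eq_iff Finite_Cartesian_Product.mat_def)

lemma cmat_pow: "cmat (mat_pow A k) = mat_pow (cmat A) k"
  by (induction k) (simp_all add: cmat_one cmat_mult)

lemma CM_eig:
  assumes "CM_bar A" "w \<noteq> 0" "cmat A *v w = z *s w"
  shows "cmod z < 1"
proof -
  have mz: "mat z *v w = z *s w"
    by (simp add: Finite_Cartesian_Product.vec_eq_iff matrix_vector_mult_def Finite_Cartesian_Product.mat_def
        if_distrib if_distribR cong: if_cong)
  have "(mat z - cmat A) *v w = 0"
    using assms(3) mz by (simp add: matrix_vector_mult_diff_rdistrib)
  then have "\<not> invertible (mat z - cmat A)"
    using assms(2) matrix_left_invertible_ker invertible_left_inverse by blast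
  then have "det (mat z - cmat A) = 0" using invertible_det_nz by blast
  then show ?thesis using assms(1) unfolding CM_bar_def by blast
qed

lemma decay_real:
  assumes "CM_bar A"
  shows "\<exists>c r. 0 < r \<and> r < 1 \<and> (\<forall>k i j. \<bar>mat_pow A k $ i $ j\<bar> \<le> c * r^k)"
proof -
  obtain c r where "0 < r" "r < 1" and b: "\<forall>k i j. cmod (mat_pow (cmat A) k $ i $ j) \<le> c * r^k"
    using bridge_decay[of "cmat A"] CM_eig[OF assms] by blast
  moreover have "\<bar>mat_pow A k $ i $ j\<bar> \<le> c * r^k" for k i j
    using b[rule_format, of k i j] unfolding cmat_pow[symmetric] by (simp add: cmat_def)
  ultimately show ?thesis by blast
qed

lemma mat_pow_transpose: "mat_pow (transpose A) k = transpose (mat_pow (A::real^'n^'n) k)"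
proof (induction k)
  case 0 then show ?case by (simp add: transpose_mat)
next
  case (Suc k)
  have "mat_pow (transpose A) (Suc k) = transpose A ** transpose (mat_pow A k)" using Suc by simp
  also have "\<dots> = transpose (mat_pow A k ** A)" by (simp add: matrix_transpose_mul)
  also have "\<dots> = transpose (mat_pow A (Suc k))" by (simp only: mat_pow_Suc')
  finally show ?case .
qed

lemma norm_mv_bound:
  fixes A :: "real^'n^'m"
  assumes "\<And>i j. \<bar>A$i$j\<bar> \<le> B"
  shows "norm (A *v x) \<le> real CARD('m) * real CARD('n) * B * norm x"
proof -
  have "norm (A *v x) \<le> onorm ((*v) A) * norm x"
    by (rule onorm) simp
  also have "\<dots> \<le> real CARD('m) * real CARD('n) * B * norm x"
    by (rule mult_right_mono[OF onorm_le_matrix_component[OF assms]]) simp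
  finally show ?thesis .
qed

lemma entry_le_norm: "\<bar>(A::real^'n^'m)$i$j\<bar> \<le> norm A"
proof -
  have "\<bar>A$i$j\<bar> \<le> norm (A$i)" by (rule component_le_norm_cart)
  moreover have "norm (A$i) \<le> norm A" by (rule Finite_Cartesian_Product.norm_nth_le)
  ultimately show ?thesis by simp
qed

lemma decay_vec:
  fixes A :: "real^'n^'n"
  assumes "CM_bar A"
  shows "(\<lambda>k. mat_pow (transpose A) k *v v) \<longlonglongrightarrow> 0"
proof -
  obtain c r where r: "0 < r" "r < 1" and b: "\<And>k i j. \<bar>mat_pow A k $ i $ j\<bar> \<le> c * r^k"
    using decay_real[OF assms] by blast
  define K where "K = real CARD('n) * real CARD('n) * c * norm v"
  have "norm (mat_pow (transpose A) k *v v) \<le> real CARD('n) * real CARD('n) * (c * r^k) * norm v" for k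
  proof (rule norm_mv_bound)
    fix i j show "\<bar>mat_pow (transpose A) k $ i $ j\<bar> \<le> c * r ^ k"
      unfolding mat_pow_transpose by (simp add: transpose_def b)
  qed
  then have bd: "norm (mat_pow (transpose A) k *v v) \<le> K * r^k" for k
    unfolding K_def by (simp add: mult_ac)
  have "(\<lambda>k. K * r^k) \<longlonglongrightarrow> K * 0"
    by (intro tendsto_mult tendsto_const LIMSEQ_power_zero) (use r in auto)
  then have "(\<lambda>k. K * r^k) \<longlonglongrightarrow> 0" by simp
  then show ?thesis by (rule Lim_null_comparison[OF always_eventually[OF allI[OF bd]]])
qed



lemma inner_mv: "(x::real^'n) \<bullet> (A *v y) = (transpose A *v x) \<bullet> y"
  by (simp add: dot_lmul_matrix)

lemma Ediag_sum_entry: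
  "(\<Sum>k\<in>P. c k *\<^sub>R Ediag k) $ i $ j = (if i = j \<and> i \<in> P then c i else 0)"
proof (cases "i = j")
  case True then show ?thesis by (simp add: Ediag_def if_distrib sum.delta cong: if_cong)
next
  case False then show ?thesis by (auto simp: Ediag_def intro!: sum.neutral)
qed

lemma diag_mv: "(\<Sum>k\<in>P. c k *\<^sub>R Ediag k) *v x = (\<chi> i. if i \<in> P then c i * x$i else 0)"
  unfolding matrix_vector_mult_def Ediag_sum_entry
  by (simp add: Finite_Cartesian_Product.vec_eq_iff if_distrib if_distribR sum.delta cong: if_cong)

lemma diag_form: "x \<bullet> ((\<Sum>k\<in>P. c k *\<^sub>R Ediag k) *v x) = (\<Sum>k\<in>P. c k * (x$k)^2)"
proof -
  have "x \<bullet> ((\<Sum>k\<in>P. c k *\<^sub>R Ediag k) *v x) = (\<Sum>i\<in>UNIV. if i \<in> P then c i * (x$i)^2 else 0)"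
    by (simp add: diag_mv inner_vec_def if_distrib if_distribR power2_eq_square mult_ac cong: if_cong)
  also have "\<dots> = (\<Sum>i\<in>UNIV \<inter> P. c i * (x$i)^2)"
    by (rule sum.inter_restrict[symmetric]) simp
  finally show ?thesis by simp
qed

lemma lyap_pd:
  fixes A S M :: "real^'n^'n"
  assumes CM: "CM_bar A"
    and lyap: "A ** S ** transpose A - S + \<epsilon> *\<^sub>R M = 0"
    and eps: "\<epsilon> > 0"
    and Mpsd: "\<And>x. 0 \<le> x \<bullet> (M *v x)"
    and good: "\<And>v. v \<noteq> 0 \<Longrightarrow> \<exists>j. 0 < (mat_pow (transpose A) j *v v) \<bullet> (M *v (mat_pow (transpose A) j *v v))"
    and v: "v \<noteq> 0"
  shows "0 < v \<bullet> (S *v v)"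
proof -
  define B where "B = transpose A"
  define w where "w k = mat_pow B k *v v" for k
  define q where "q X x = x \<bullet> (X *v x)" for X and x :: "real^'n"
  have Seq: "S = A ** S ** transpose A + \<epsilon> *\<^sub>R M"
    using lyap by (simp add: algebra_simps eq_neg_iff_add_eq_0)
  have step: "q S x = q S (B *v x) + \<epsilon> * q M x" for x
  proof -
    have "q S x = x \<bullet> ((A ** S ** transpose A) *v x) + x \<bullet> ((\<epsilon> *\<^sub>R M) *v x)"
      unfolding q_def by (subst Seq) (simp add: matrix_vector_mult_add_rdistrib inner_add_right)
    also have "x \<bullet> ((A ** S ** transpose A) *v x) = q S (B *v x)"
      unfolding q_def B_def by (simp add: matrix_vector_mul_assoc[symmetric] inner_mv)
    also have "x \<bullet> ((\<epsilon> *\<^sub>R M) *v x) = \<epsilon> * q M x"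
      unfolding q_def by (simp add: Finite_Cartesian_Product.vec_eq_iff matrix_vector_mult_def
          scaleR_matrix_vector_assoc sum_distrib_left inner_vec_def mult_ac)
    finally show ?thesis .
  qed
  have wS: "w (Suc k) = B *v w k" for k
    unfolding w_def by (simp add: matrix_vector_mul_assoc)
  have iter: "q S v = q S (w k) + \<epsilon> * (\<Sum>j<k. q M (w j))" for k
  proof (induction k)
    case 0 then show ?case by (simp add: w_def)
  next
    case (Suc k)
    then show ?case using step[of "w k"] by (simp add: wS algebra_simps)
  qed
  have qMnn: "0 \<le> q M x" for x unfolding q_def by (rule Mpsd)
  have lim0: "(\<lambda>k. q S (w k)) \<longlonglongrightarrow> 0"
  proof -
    have wl: "w \<longlonglongrightarrow> 0" unfolding w_def B_def by (rule decay_vec[OF CM])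
    have "(\<lambda>k. S *v w k) \<longlonglongrightarrow> S *v 0"
      by (rule bounded_linear.tendsto[OF matrix_vector_mul_bounded_linear wl])
    then have "(\<lambda>k. w k \<bullet> (S *v w k)) \<longlonglongrightarrow> 0 \<bullet> (S *v 0)"
      by (intro tendsto_inner wl)
    then show ?thesis unfolding q_def by simp
  qed
  from good[OF v] obtain j where j: "0 < q M (w j)" unfolding q_def w_def B_def by blast
  have "\<epsilon> * q M (w j) \<le> q S v"
  proof (rule LIMSEQ_le_const2)
    show "(\<lambda>k. q S (w k) + \<epsilon> * q M (w j)) \<longlonglongrightarrow> \<epsilon> * q M (w j)"
      using tendsto_add[OF lim0 tendsto_const] by simp
    show "\<exists>N. \<forall>k\<ge>N. q S (w k) + \<epsilon> * q M (w j) \<le> q S v"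
    proof (intro exI allI impI)
      fix k assume "Suc j \<le> k"
      then have "q M (w j) \<le> (\<Sum>i<k. q M (w i))"
        by (intro member_le_sum) (auto simp: qMnn)
      then show "q S (w k) + \<epsilon> * q M (w j) \<le> q S v"
        using iter[of k] eps by (simp add: mult_left_mono)
    qed
  qed
  moreover have "0 < \<epsilon> * q M (w j)" using eps j by simp
  ultimately show ?thesis unfolding q_def by simp
qed



lemma orth_inv: "orthogonal_matrix G \<Longrightarrow> matrix_inv G = transpose G"
proof -
  assume o: "orthogonal_matrix G"
  then have g1: "transpose G ** G = mat 1" and g2: "G ** transpose G = mat 1"
    by (auto simp: orthogonal_matrix_def)
  have "\<exists>G'. G ** G' = mat 1 \<and> G' ** G = mat 1" using g1 g2 by blast
  then have h: "G ** matrix_inv G = mat 1 \<and> matrix_inv G ** G = mat 1"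
    unfolding matrix_inv_def by (rule someI_ex)
  have "matrix_inv G = matrix_inv G ** (G ** transpose G)" using g2 by simp
  also have "\<dots> = transpose G" using h by (simp add: matrix_mul_assoc)
  finally show ?thesis .
qed

lemma pow_conj:
  assumes "transpose G ** G = mat 1"
  shows "mat_pow (G ** A ** transpose G) j = (if j = 0 then mat 1 else G ** mat_pow A j ** transpose G)"
proof (induction j)
  case 0 then show ?case by simp
next
  case (Suc j)
  show ?case
  proof (cases "j = 0")
    case True then show ?thesis by simp
  next
    case False
    have "mat_pow (G ** A ** transpose G) (Suc j) = (G ** A ** transpose G) ** (G ** mat_pow A j ** transpose G)"
      using Suc False by simp
    also have "\<dots> = G ** A ** (transpose G ** G) ** mat_pow A j ** transpose G"
      by (simp add: matrix_mul_assoc)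
    also have "\<dots> = G ** mat_pow A (Suc j) ** transpose G"
      using assms by (simp add: matrix_mul_assoc)
    finally show ?thesis by simp
  qed
qed

lemma span_full_orth:
  fixes v :: "real^'n"
  assumes "dim (span S) = CARD('n)" and "\<And>y. y \<in> S \<Longrightarrow> v \<bullet> y = 0"
  shows "v = 0"
proof -
  have "span S = UNIV" using assms(1) dim_eq_full[of S] by simp
  then have "v \<in> span S" by simp
  then have "orthogonal v v" by (rule orthogonal_to_span) (simp add: Linear_Algebra.orthogonal_def assms(2))
  then show ?thesis by (simp add: Linear_Algebra.orthogonal_def)
qed

lemma good_cases:
  fixes A M G :: "real^'n^'n"
  assumes orth: "orthogonal_matrix G"
    and Gdiag: "G ** M ** transpose G = (\<Sum>k\<in>P. lam k *\<^sub>R Ediag k)"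
    and lam_pos: "\<forall>k\<in>P. lam k > 0"
    and lt: "lam_tri > 0"
    and Mge: "psd_ge M (lam_tri *\<^sub>R (\<Sum>k\<in>Q. Ediag k))"
    and cases: "rank M = CARD('n)
             \<or> (\<exists>k\<in>P. krylov_dim (G ** A ** matrix_inv G) (uvec k) = CARD('n))
             \<or> card Q = CARD('n)
             \<or> (\<exists>k\<in>Q. krylov_dim A (uvec k) = CARD('n))"
    and v: "v \<noteq> 0"
  shows "\<exists>j. 0 < (mat_pow (transpose A) j *v v) \<bullet> (M *v (mat_pow (transpose A) j *v v))"
proof -
  define D where "D = (\<Sum>k\<in>P. lam k *\<^sub>R Ediag k)"
  have g1: "transpose G ** G = mat 1" and g2: "G ** transpose G = mat 1"
    using orth by (auto simp: orthogonal_matrix_def)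
  have Mrep: "M = transpose G ** D ** G"
  proof -
    have "transpose G ** D ** G = transpose G ** (G ** M ** transpose G) ** G" using Gdiag D_def by simp
    also have "\<dots> = (transpose G ** G) ** M ** (transpose G ** G)" by (simp add: matrix_mul_assoc)
    finally show ?thesis using g1 by simp
  qed
  have qG: "x \<bullet> (M *v x) = (\<Sum>k\<in>P. lam k * ((G *v x)$k)^2)" for x
  proof -
    have "x \<bullet> (M *v x) = x \<bullet> (transpose G *v (D *v (G *v x)))"
      unfolding Mrep by (simp only: matrix_vector_mul_assoc matrix_mul_assoc)
    also have "\<dots> = (transpose (transpose G) *v x) \<bullet> (D *v (G *v x))" by (rule inner_mv)
    finally have "x \<bullet> (M *v x) = (G *v x) \<bullet> (D *v (G *v x))" by (simp only: Finite_Cartesian_Product.transpose_transpose)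
    then show ?thesis unfolding D_def by (simp add: diag_form)
  qed
  have qQ: "lam_tri * (\<Sum>k\<in>Q. (x$k)^2) \<le> x \<bullet> (M *v x)" for x
  proof -
    have "0 \<le> x \<bullet> ((M - lam_tri *\<^sub>R (\<Sum>k\<in>Q. Ediag k)) *v x)" using Mge unfolding psd_ge_def by blast
    also have "\<dots> = x \<bullet> (M *v x) - x \<bullet> ((\<Sum>k\<in>Q. lam_tri *\<^sub>R Ediag k) *v x)"
      by (simp add: matrix_vector_mult_diff_rdistrib inner_diff_right scaleR_sum_right)
    also have "x \<bullet> ((\<Sum>k\<in>Q. lam_tri *\<^sub>R Ediag k) *v x) = lam_tri * (\<Sum>k\<in>Q. (x$k)^2)"
      by (simp add: diag_form sum_distrib_left)
    finally show ?thesis by simp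
  qed
  have Ginj: "G *v x = 0 \<Longrightarrow> x = 0" for x
    by (metis g1 matrix_vector_mul_assoc matrix_vector_mul_lid matrix_vector_mult_0_right)
  define w where "w j = mat_pow (transpose A) j *v v" for j
  have w0: "w 0 = v" by (simp add: w_def)
  have wk: "w j $ k = v \<bullet> (mat_pow A j *v uvec k)" for j k
  proof -
    have "w j $ k = w j \<bullet> uvec k" by (simp add: uvec_def inner_axis)
    also have "\<dots> = (transpose (mat_pow A j) *v v) \<bullet> uvec k"
      by (simp only: w_def mat_pow_transpose)
    also have "\<dots> = v \<bullet> (mat_pow A j *v uvec k)" by (rule inner_mv[symmetric])
    finally show ?thesis .
  qed
  from cases show ?thesis
  proof (elim disjE)
    assume "rank M = CARD('n)"
    then have inj: "inj ((*v) M)" by (simp add: full_rank_injective)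
    have P: "P = UNIV"
    proof (rule ccontr)
      assume "P \<noteq> UNIV"
      then obtain a where a: "a \<notin> P" by blast
      define x where "x = transpose G *v axis a 1"
      have Gx: "G *v x = axis a 1" unfolding x_def by (simp only: matrix_vector_mul_assoc g2 matrix_vector_mul_lid)
      have "D *v axis a 1 = 0" unfolding D_def diag_mv
        using a by (auto simp: Finite_Cartesian_Product.vec_eq_iff axis_def)
      then have "M *v x = M *v 0" unfolding Mrep
        by (simp add: matrix_vector_mul_assoc[symmetric] Gx)
      then have "x = 0" using inj by (metis injD)
      then show False using Gx by simp
    qed
    have "G *v v \<noteq> 0" using Ginj v by blast
    then obtain k where k: "(G *v v) $ k \<noteq> 0" by (auto simp: Finite_Cartesian_Product.vec_eq_iff)
    have "0 < (\<Sum>k\<in>P. lam k * ((G *v v)$k)^2)"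
    proof (rule sum_pos2[where i=k])
      show "finite P" by simp
      show "k \<in> P" using P by simp
      show "0 < lam k * ((G *v v) $ k)\<^sup>2" using lam_pos P k by (simp add: mult_pos_pos)
      show "\<And>i. i \<in> P \<Longrightarrow> 0 \<le> lam i * ((G *v v) $ i)\<^sup>2" using lam_pos
        by (simp add: less_imp_le)
    qed
    then show ?thesis using qG[of v] w0 unfolding w_def by (intro exI[of _ 0]) simp
  next
    assume "\<exists>k0\<in>P. krylov_dim (G ** A ** matrix_inv G) (uvec k0) = CARD('n)"
    then obtain k0 where k0: "k0 \<in> P" and kd: "krylov_dim (G ** A ** transpose G) (uvec k0) = CARD('n)"
      using orth_inv[OF orth] by auto
    show ?thesis
    proof (rule ccontr)
      assume "\<not> ?thesis"
      then have z: "w j \<bullet> (M *v w j) \<le> 0" for j unfolding w_def by (simp add: not_less)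
      have gz: "(G *v w j) $ k0 = 0" for j
      proof -
        have "lam k0 * ((G *v w j)$k0)^2 \<le> (\<Sum>k\<in>P. lam k * ((G *v w j)$k)^2)"
          by (rule member_le_sum) (use k0 lam_pos in \<open>auto intro: mult_nonneg_nonneg less_imp_le\<close>)
        also have "\<dots> \<le> 0" using z[of j] qG[of "w j"] by simp
        finally show ?thesis using lam_pos k0
          by (metis (no_types, lifting) mult_pos_pos not_less power2_eq_square zero_less_power2 mult_eq_0_iff order_antisym)
      qed
      have "G *v v = 0"
      proof (rule span_full_orth[where S = "range (\<lambda>j. mat_pow (G ** A ** transpose G) j *v uvec k0)"])
        show "dim (span (range (\<lambda>j. mat_pow (G ** A ** transpose G) j *v uvec k0))) = CARD('n)"
          using kd unfolding krylov_dim_def .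
        fix y assume "y \<in> range (\<lambda>j. mat_pow (G ** A ** transpose G) j *v uvec k0)"
        then obtain j where y: "y = mat_pow (G ** A ** transpose G) j *v uvec k0" by blast
        have oi: "(G *v x) \<bullet> (G *v z) = x \<bullet> z" for x z
        proof -
          have "(G *v x) \<bullet> (G *v z) = (transpose G *v (G *v x)) \<bullet> z" by (rule inner_mv)
          then show ?thesis by (simp only: matrix_vector_mul_assoc g1 matrix_vector_mul_lid)
        qed
        have "(G *v v) \<bullet> y = v \<bullet> ((mat_pow A j ** transpose G) *v uvec k0)"
        proof (cases "j = 0")
          case True
          have "(G *v v) \<bullet> y = (G *v v) \<bullet> (G *v (transpose G *v uvec k0))"
            using True by (simp only: y mat_pow.simps matrix_vector_mul_lid matrix_vector_mul_assoc g2)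
          then show ?thesis using True by (simp only: oi mat_pow.simps matrix_mul_lid)
        next
          case False
          have "y = G *v ((mat_pow A j ** transpose G) *v uvec k0)"
            using False by (simp only: y pow_conj[OF g1] if_False matrix_vector_mul_assoc matrix_mul_assoc)
          then show ?thesis by (simp only: oi)
        qed
        also have "\<dots> = ((mat_pow A j ** transpose G) *v uvec k0) \<bullet> v" by (rule inner_commute)
        also have "\<dots> = (transpose (G ** transpose (mat_pow A j)) *v uvec k0) \<bullet> v"
          by (simp only: matrix_transpose_mul Finite_Cartesian_Product.transpose_transpose)
        also have "\<dots> = uvec k0 \<bullet> ((G ** transpose (mat_pow A j)) *v v)" by (rule inner_mv[symmetric])
        also have "\<dots> = (G *v w j) $ k0"
          by (simp only: w_def uvec_def inner_axis' mat_pow_transpose matrix_vector_mul_assoc) simp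
        finally show "(G *v v) \<bullet> y = 0" using gz by simp
      qed
      then show False using Ginj v by blast
    qed
  next
    assume "card Q = CARD('n)"
    then have Q: "Q = UNIV" using card_subset_eq[of UNIV Q] by simp
    obtain k where k: "v $ k \<noteq> 0" using v by (auto simp: Finite_Cartesian_Product.vec_eq_iff)
    have "0 < (\<Sum>k\<in>Q. (v$k)^2)" by (rule sum_pos2[where i=k]) (use k Q in auto)
    then have "0 < v \<bullet> (M *v v)" using qQ[of v] lt by (smt (verit) mult_pos_pos)
    then show ?thesis using w0 unfolding w_def by (intro exI[of _ 0]) simp
  next
    assume "\<exists>k0\<in>Q. krylov_dim A (uvec k0) = CARD('n)"
    then obtain k0 where k0: "k0 \<in> Q" and kd: "krylov_dim A (uvec k0) = CARD('n)" by blast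
    show ?thesis
    proof (rule ccontr)
      assume "\<not> ?thesis"
      then have z: "w j \<bullet> (M *v w j) \<le> 0" for j unfolding w_def by (simp add: not_less)
      have gz: "w j $ k0 = 0" for j
      proof -
        have "(w j $ k0)^2 \<le> (\<Sum>k\<in>Q. (w j $ k)^2)"
          by (rule member_le_sum) (use k0 in auto)
        then have "lam_tri * (w j $ k0)^2 \<le> 0" using qQ[of "w j"] z[of j] lt
          by (smt (verit) mult_left_mono)
        then show ?thesis using lt
          by (metis mult_pos_pos not_less power2_eq_square zero_less_power2 mult_eq_0_iff order_antisym)
      qed
      have "v = 0"
      proof (rule span_full_orth[where S = "range (\<lambda>j. mat_pow A j *v uvec k0)"])
        show "dim (span (range (\<lambda>j. mat_pow A j *v uvec k0))) = CARD('n)"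
          using kd unfolding krylov_dim_def .
        fix y assume "y \<in> range (\<lambda>j. mat_pow A j *v uvec k0)"
        then obtain j where y: "y = mat_pow A j *v uvec k0" by blast
        show "v \<bullet> y = 0" using gz[of j] wk[of j k0] y by simp
      qed
      then show False using v by blast
    qed
  qed
qed



lemma bl_mv: "bounded_linear (\<lambda>A::real^'n^'m. A *v x)"
proof -
  have "linear (\<lambda>A::real^'n^'m. A *v x)"
    by (rule linearI) (simp_all add: matrix_vector_mult_add_rdistrib scaleR_matrix_vector_assoc)
  then show ?thesis by (simp add: linear_conv_bounded_linear)
qed

lemma bl_transpose: "bounded_linear (transpose :: real^'n^'m \<Rightarrow> real^'m^'n)"
proof -
  have "linear (transpose :: real^'n^'m \<Rightarrow> real^'m^'n)"
    by (rule linearI) (simp_all add: transpose_def Finite_Cartesian_Product.vec_eq_iff)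
  then show ?thesis by (simp add: linear_conv_bounded_linear)
qed

lemma Phi_inj:
  fixes C \<Phi> :: "real \<Rightarrow> real^'n^'n"
  assumes C_cont: "continuous_on {0..} C"
    and ode: "\<forall>t\<ge>0. (\<Phi> has_vector_derivative (C t ** \<Phi> t)) (at t within {0..})"
    and \<Phi>0: "\<Phi> 0 = mat 1" and t: "t \<ge> 0" and x: "\<Phi> t *v x = 0"
  shows "x = 0"
proof -
  have "compact (C ` {0..t})"
    by (rule compact_continuous_image[OF continuous_on_subset[OF C_cont] compact_Icc]) auto
  then obtain B where B: "B > 0" "\<And>s. s \<in> {0..t} \<Longrightarrow> norm (C s) \<le> B"
    using compact_imp_bounded bounded_pos by (metis imageI)
  define K where "K = real CARD('n) * real CARD('n) * B"
  have K0: "K \<ge> 0" unfolding K_def using B by simp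
  have Cb: "norm (C s *v z) \<le> K * norm z" if "s \<in> {0..t}" for s z
  proof -
    have "norm (C s *v z) \<le> real CARD('n) * real CARD('n) * B * norm z"
      by (rule norm_mv_bound) (meson B(2) that entry_le_norm order_trans)
    then show ?thesis by (simp add: K_def)
  qed
  define y where "y s = \<Phi> s *v x" for s
  have dy: "(y has_vector_derivative (C s *v y s)) (at s)" if "0 < s" for s
  proof -
    have "(\<Phi> has_vector_derivative (C s ** \<Phi> s)) (at s within {0..})" using ode that by simp
    moreover have "at s within {0..} = at s" using that by (intro at_within_interior) simp
    ultimately have "(\<Phi> has_vector_derivative (C s ** \<Phi> s)) (at s)" by simp
    from bounded_linear.has_vector_derivative[OF bl_mv this, of x]
    show ?thesis unfolding y_def by (simp add: matrix_vector_mul_assoc)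
  qed
  have cPhi: "continuous_on {0..} \<Phi>"
    unfolding continuous_on_eq_continuous_within
    using ode has_vector_derivative_continuous by blast
  have cy: "continuous_on {0..t} y"
    unfolding y_def
    by (rule bounded_linear.continuous_on[OF bl_mv continuous_on_subset[OF cPhi]]) auto
  define h where "h s = (y s \<bullet> y s) * exp (2 * K * s)" for s
  have "h 0 \<le> h t"
  proof (rule DERIV_nonneg_imp_increasing_open[OF t])
    fix s assume s: "0 < s" "s < t"
    let ?y' = "C s *v y s"
    have d1: "(y has_derivative (\<lambda>h. h *\<^sub>R ?y')) (at s)"
      using dy[OF s(1)] by (simp add: has_vector_derivative_def)
    have "((\<lambda>s. y s \<bullet> y s) has_derivative (\<lambda>h. y s \<bullet> (h *\<^sub>R ?y') + (h *\<^sub>R ?y') \<bullet> y s)) (at s)"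
      by (rule has_derivative_inner[OF d1 d1])
    moreover have "(\<lambda>h. y s \<bullet> (h *\<^sub>R ?y') + (h *\<^sub>R ?y') \<bullet> y s) = (*) (2 * (y s \<bullet> ?y'))"
      by (auto simp: fun_eq_iff inner_commute algebra_simps)
    ultimately have dg: "((\<lambda>s. y s \<bullet> y s) has_real_derivative (2 * (y s \<bullet> ?y'))) (at s)"
      by (simp add: has_field_derivative_def)
    have de: "((\<lambda>s. exp (2 * K * s)) has_real_derivative (exp (2 * K * s) * (2 * K))) (at s)"
      by (auto intro!: derivative_eq_intros)
    have dh: "(h has_real_derivative
        (2 * (y s \<bullet> ?y')) * exp (2 * K * s) + (exp (2 * K * s) * (2 * K)) * (y s \<bullet> y s)) (at s)"
      unfolding h_def by (rule DERIV_mult[OF dg de])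
    have "\<bar>y s \<bullet> ?y'\<bar> \<le> norm (y s) * norm ?y'" by (rule Cauchy_Schwarz_ineq2)
    also have "\<dots> \<le> norm (y s) * (K * norm (y s))"
      using Cb[of s "y s"] s by (intro mult_left_mono) auto
    also have "\<dots> = K * (y s \<bullet> y s)" by (simp add: power2_norm_eq_inner[symmetric] power2_eq_square)
    finally have "- (K * (y s \<bullet> y s)) \<le> y s \<bullet> ?y'" by linarith
    then have "0 \<le> 2 * (y s \<bullet> ?y') + (y s \<bullet> y s) * (2 * K)" by (simp add: algebra_simps)
    then have "0 \<le> (2 * (y s \<bullet> ?y') + (y s \<bullet> y s) * (2 * K)) * exp (2 * K * s)" by simp
    then have "0 \<le> (2 * (y s \<bullet> ?y')) * exp (2 * K * s) + (exp (2 * K * s) * (2 * K)) * (y s \<bullet> y s)"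
      by (simp add: algebra_simps)
    with dh show "\<exists>d. (h has_real_derivative d) (at s) \<and> 0 \<le> d" by blast
  next
    show "continuous_on {0..t} h"
      unfolding h_def by (intro continuous_intros cy)
  qed
  moreover have "h t = 0" using x by (simp add: h_def y_def)
  moreover have "h 0 = x \<bullet> x" using \<Phi>0 by (simp add: h_def y_def)
  ultimately have "x \<bullet> x \<le> 0" by simp
  then show ?thesis by (metis antisym inner_ge_zero inner_eq_zero_iff)
qed

lemma transpose_inj:
  fixes P :: "real^'n^'n"
  assumes "\<And>x. P *v x = 0 \<Longrightarrow> x = 0" and "transpose P *v z = 0"
  shows "z = 0"
proof -
  have "inj ((*v) P)"
    by (rule injI) (metis assms(1) eq_iff_diff_eq_0 matrix_vector_mult_diff_distrib)
  then obtain B where "B ** P = mat 1" using matrix_left_invertible_injective by blast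
  then have "P ** B = mat 1" using matrix_left_right_inverse by blast
  then have tB: "transpose B ** transpose P = mat 1"
    by (metis matrix_transpose_mul transpose_mat)
  have "z = transpose B *v (transpose P *v z)"
    by (simp only: matrix_vector_mul_assoc tB matrix_vector_mul_lid)
  then show ?thesis using assms(2) by simp
qed

lemma M_psd_from_ge:
  assumes Mge: "psd_ge M (lam_tri *\<^sub>R (\<Sum>k\<in>Q. Ediag k))" and lt: "lam_tri > 0"
  shows "0 \<le> x \<bullet> (M *v x)"
proof -
  have "0 \<le> x \<bullet> ((M - lam_tri *\<^sub>R (\<Sum>k\<in>Q. Ediag k)) *v x)" using Mge unfolding psd_ge_def by blast
  also have "\<dots> = x \<bullet> (M *v x) - x \<bullet> ((\<Sum>k\<in>Q. lam_tri *\<^sub>R Ediag k) *v x)"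
    by (simp add: matrix_vector_mult_diff_rdistrib inner_diff_right scaleR_sum_right)
  also have "x \<bullet> ((\<Sum>k\<in>Q. lam_tri *\<^sub>R Ediag k) *v x) = lam_tri * (\<Sum>k\<in>Q. (x$k)^2)"
    by (simp add: diag_form sum_distrib_left)
  finally have "lam_tri * (\<Sum>k\<in>Q. (x$k)^2) \<le> x \<bullet> (M *v x)" by simp
  moreover have "0 \<le> lam_tri * (\<Sum>k\<in>Q. (x$k)^2)" using lt by (simp add: sum_nonneg)
  ultimately show ?thesis by linarith
qed



theorem corollary3p1:
  fixes \<theta> \<epsilon> :: real
    and C :: "real \<Rightarrow> real^'n^'n"
    and \<Gamma> :: "real \<Rightarrow> real^'N^'n"
    and \<Phi> :: "real \<Rightarrow> real^'n^'n"
    and M \<Sigma>0 G0 :: "real^'n^'n"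
    and P :: "'n set" and lam :: "'n \<Rightarrow> real"
    and lam_tri :: real and Q :: "'n set"
    and \<Sigma> :: "real \<Rightarrow> real^'n^'n"
  assumes theta_pos: "\<theta> > 0" and eps_pos: "\<epsilon> > 0"
    and C_cont: "continuous_on {0..} C" and \<Gamma>_cont: "continuous_on {0..} \<Gamma>"
    and C_per: "\<forall>t\<ge>0. C (t + \<theta>) = C t"
    and \<Gamma>_per: "\<forall>t\<ge>0. \<Gamma> (t + \<theta>) = \<Gamma> t"
    and \<Phi>_ode: "\<forall>t\<ge>0. (\<Phi> has_vector_derivative (C t ** \<Phi> t)) (at t within {0..})"
    and \<Phi>_0: "\<Phi> 0 = mat 1"
    and \<Phi>_CM: "CM_bar (\<Phi> \<theta>)"
    and M_def: "M = integral {0..\<theta>} (\<lambda>t. (\<Phi> \<theta> ** matrix_inv (\<Phi> t) ** \<Gamma> t)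
                                        ** transpose (\<Phi> \<theta> ** matrix_inv (\<Phi> t) ** \<Gamma> t))"
    and G0_orth: "orthogonal_matrix G0"
    and G0_diag: "G0 ** M ** transpose G0 = (\<Sum>k\<in>P. lam k *\<^sub>R Ediag k)"
    and lam_pos: "\<forall>k\<in>P. lam k > 0"
    and lam_tri_pos: "lam_tri > 0"
    and M_ge: "psd_ge M (lam_tri *\<^sub>R (\<Sum>k\<in>Q. Ediag k))"
    and \<Sigma>0_sym: "transpose \<Sigma>0 = \<Sigma>0"
    and \<Sigma>0_lyap: "\<Phi> \<theta> ** \<Sigma>0 ** transpose (\<Phi> \<theta>) - \<Sigma>0 + \<epsilon> *\<^sub>R M = 0"
    and \<Sigma>_def: "\<forall>t\<ge>0. \<Sigma> t = \<Phi> t ** (\<Sigma>0 + \<epsilon> *\<^sub>R integral {0..t}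
               (\<lambda>s. (matrix_inv (\<Phi> s) ** \<Gamma> s) ** transpose (matrix_inv (\<Phi> s) ** \<Gamma> s)))
               ** transpose (\<Phi> t)"
    and cases: "rank M = CARD('n)
             \<or> (\<exists>k\<in>P. krylov_dim (G0 ** \<Phi> \<theta> ** matrix_inv G0) (uvec k) = CARD('n))
             \<or> card Q = CARD('n)
             \<or> (\<exists>k\<in>Q. krylov_dim (\<Phi> \<theta>) (uvec k) = CARD('n))"
  shows "\<forall>t\<ge>0. pos_def (\<Sigma> t)"
proof (intro allI impI)
  fix t :: real assume t: "t \<ge> 0"
  define F where "F s = matrix_inv (\<Phi> s) ** \<Gamma> s" for s
  define f where "f s = F s ** transpose (F s)" for s
  define I where "I = integral {0..t} f"
  define S' where "S' = \<Sigma>0 + \<epsilon> *\<^sub>R I"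
  have \<Sigma>t: "\<Sigma> t = \<Phi> t ** S' ** transpose (\<Phi> t)"
    using \<Sigma>_def t unfolding S'_def I_def F_def f_def by blast
  have fsym: "transpose (f s) = f s" for s
    by (simp add: f_def matrix_transpose_mul)
  have Isym: "transpose I = I"
  proof (cases "f integrable_on {0..t}")
    case True
    have "integral {0..t} (transpose \<circ> f) = transpose I"
      unfolding I_def by (rule integral_linear[OF True bl_transpose])
    moreover have "transpose \<circ> f = f" by (simp add: comp_def fsym)
    ultimately show ?thesis unfolding I_def by simp
  next
    case False
    then have "I = 0" unfolding I_def by (rule not_integrable_integral)
    then show ?thesis by (simp add: transpose_def Finite_Cartesian_Product.vec_eq_iff)
  qed
  have lin: "transpose (X + c *\<^sub>R Y) = transpose X + c *\<^sub>R transpose Y" for X Y :: "real^'n^'n" and c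
    by (simp add: transpose_def Finite_Cartesian_Product.vec_eq_iff)
  have S'sym: "transpose S' = S'" by (simp only: S'_def lin \<Sigma>0_sym Isym)
  have Phi_inj': "\<And>x. \<Phi> t *v x = 0 \<Longrightarrow> x = 0"
    using Phi_inj[OF C_cont \<Phi>_ode \<Phi>_0 t] by blast
  show "pos_def (\<Sigma> t)"
    unfolding pos_def_def
  proof (intro conjI allI impI)
    show "transpose (\<Sigma> t) = \<Sigma> t"
      unfolding \<Sigma>t by (simp only: matrix_transpose_mul Finite_Cartesian_Product.transpose_transpose S'sym matrix_mul_assoc)
  next
    fix x :: "real^'n" assume x: "x \<noteq> 0"
    define z where "z = transpose (\<Phi> t) *v x"
    have z: "z \<noteq> 0" using transpose_inj[OF Phi_inj'] x unfolding z_def by blast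
    have "x \<bullet> (\<Sigma> t *v x) = x \<bullet> (\<Phi> t *v (S' *v z))"
      unfolding \<Sigma>t z_def by (simp only: matrix_vector_mul_assoc matrix_mul_assoc)
    also have "\<dots> = z \<bullet> (S' *v z)" unfolding z_def by (rule inner_mv)
    also have "\<dots> = z \<bullet> (\<Sigma>0 *v z) + \<epsilon> * (z \<bullet> (I *v z))"
      by (simp add: S'_def matrix_vector_mult_add_rdistrib scaleR_matrix_vector_assoc[symmetric]
          inner_add_right)
    finally have eq: "x \<bullet> (\<Sigma> t *v x) = z \<bullet> (\<Sigma>0 *v z) + \<epsilon> * (z \<bullet> (I *v z))" .
    have Inn: "0 \<le> z \<bullet> (I *v z)"
    proof (cases "f integrable_on {0..t}")
      case True
      define hq where "hq A = z \<bullet> (A *v z)" for A :: "real^'n^'n"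
      have bl: "bounded_linear hq"
        unfolding hq_def by (rule bounded_linear_compose[OF bounded_linear_inner_right bl_mv])
      have "integral {0..t} (hq \<circ> f) = hq I"
        unfolding I_def by (rule integral_linear[OF True bl])
      moreover have "0 \<le> integral {0..t} (hq \<circ> f)"
      proof (rule integral_nonneg[OF integrable_linear[OF True bl]])
        fix s
        have "(hq \<circ> f) s = z \<bullet> (F s *v (transpose (F s) *v z))"
          unfolding hq_def f_def comp_def by (simp only: matrix_vector_mul_assoc)
        also have "\<dots> = (transpose (F s) *v z) \<bullet> (transpose (F s) *v z)" by (rule inner_mv)
        finally show "0 \<le> (hq \<circ> f) s" by simp
      qed
      ultimately show ?thesis by (simp add: hq_def)
    next
      case False
      then have "I = 0" unfolding I_def by (rule not_integrable_integral)
      then show ?thesis by simp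
    qed
    have Mpsd: "\<And>y. 0 \<le> y \<bullet> (M *v y)" by (rule M_psd_from_ge[OF M_ge lam_tri_pos])
    have "0 < z \<bullet> (\<Sigma>0 *v z)"
    proof (rule lyap_pd[OF \<Phi>_CM \<Sigma>0_lyap eps_pos Mpsd _ z])
      fix v :: "real^'n" assume "v \<noteq> 0"
      then show "\<exists>j. 0 < (mat_pow (transpose (\<Phi> \<theta>)) j *v v) \<bullet> (M *v (mat_pow (transpose (\<Phi> \<theta>)) j *v v))"
        by (rule good_cases[OF G0_orth G0_diag lam_pos lam_tri_pos M_ge cases])
    qed
    then show "0 < x \<bullet> (\<Sigma> t *v x)" unfolding eq using Inn eps_pos
      by (simp add: add_pos_nonneg)
  qed
qed


end
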